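(* Let $X=\{x_j:j\in I\}$ with $I\subseteq\mathbb Z$ an interval of integers and $x_j<x_{j+1}$, and let parties $A,B$ have weak preference orders $\succeq_A,\succeq_B$ on $X$ with unique ideal points $\tau_A,\tau_B$. Then the parties agree on cross-side comparisons, meaning that for all positive integers $a,b$ such that the relevant policies belong to $X$, \[ R_A(a)\succeq_A L_A(b)\iff R_B(a)\succeq_B L_B(b) \quad\text{and}\quad L_A(b)\succeq_A R_A(a)\iff L_B(b)\succeq_B R_B(a), \] provided either of the following holds (where for each party $i$, $v_i:X\to\mathbb R$ is a utility function representing $\succeq_i$, i.e. $x\succeq_i y\iff v_i(x)\ge v_i(y)$): \begin{enumerate} \item[(i)] (Symmetric single-peaked utilities) for each party $i$ there is a strictly decreasing function $\phi_i:\mathbb Z_{\ge0}\to\mathbb R$ such that, if $\tau_i=x_c$, then $v_i(x_m)=\phi_i(|m-c|)$ for all $x_m\in X$; \item[(ii)] (Common utility shape) there is a function $u:\mathbb Z\to\mathbb R$ such that for each party $i$, if $\tau_i=x_c$, then $v_i(x_m)=u(m-c)$ for all $x_m\in X$. \end{enumerate}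
   Context: Ordinal displacement notation: for a party $i$ with ideal point $\tau_i=x_c$ and a positive integer $k$, $R_i(k)=x_{c+k}$ and $L_i(k)=x_{c-k}$, whenever these policies belong to $X$; i.e. $R_i(k)$ and $L_i(k)$ are the policies $k$ ordinal steps to the right and to the left of party $i$'s ideal point. *)

theory Defs
  imports Complex_Main
begin

definition int_interval :: "int set \<Rightarrow> bool" where
  "int_interval I \<longleftrightarrow> (\<forall>i\<in>I. \<forall>k\<in>I. \<forall>j. i \<le> j \<and> j \<le> k \<longrightarrow> j \<in> I)"

definition weak_order_on :: "'a set \<Rightarrow> ('a \<Rightarrow> 'a \<Rightarrow> bool) \<Rightarrow> bool" where
  "weak_order_on X P \<longleftrightarrow>
     (\<forall>x\<in>X. \<forall>y\<in>X. P x y \<or> P y x) \<and>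
     (\<forall>x\<in>X. \<forall>y\<in>X. \<forall>z\<in>X. P x y \<longrightarrow> P y z \<longrightarrow> P x z)"

definition unique_ideal_point :: "'a set \<Rightarrow> ('a \<Rightarrow> 'a \<Rightarrow> bool) \<Rightarrow> 'a \<Rightarrow> bool" where
  "unique_ideal_point X P t \<longleftrightarrow> t \<in> X \<and> (\<forall>y\<in>X. y \<noteq> t \<longrightarrow> P t y \<and> \<not> P y t)"

definition represents :: "'a set \<Rightarrow> ('a \<Rightarrow> 'a \<Rightarrow> bool) \<Rightarrow> ('a \<Rightarrow> real) \<Rightarrow> bool" where
  "represents X P v \<longleftrightarrow> (\<forall>x\<in>X. \<forall>y\<in>X. P x y \<longleftrightarrow> v x \<ge> v y)"

definition symmetric_sp :: "int set \<Rightarrow> (int \<Rightarrow> real) \<Rightarrow> (real \<Rightarrow> real \<Rightarrow> bool) \<Rightarrow> real \<Rightarrow> bool" where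
  "symmetric_sp I x P t \<longleftrightarrow>
     (\<exists>v \<phi>. represents (x ` I) P v \<and> (\<forall>m n :: nat. m < n \<longrightarrow> \<phi> n < \<phi> m) \<and>
        (\<forall>c\<in>I. x c = t \<longrightarrow> (\<forall>m\<in>I. v (x m) = \<phi> (nat \<bar>m - c\<bar>))))"

definition shape_utility :: "int set \<Rightarrow> (int \<Rightarrow> real) \<Rightarrow> (real \<Rightarrow> real \<Rightarrow> bool) \<Rightarrow> real \<Rightarrow> (int \<Rightarrow> real) \<Rightarrow> bool" where
  "shape_utility I x P t u \<longleftrightarrow>
     (\<exists>v. represents (x ` I) P v \<and>
        (\<forall>c\<in>I. x c = t \<longrightarrow> (\<forall>m\<in>I. v (x m) = u (m - c))))"

end

theory Submission
  imports Defs
begin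

lemma sym_case:
  assumes "symmetric_sp I x P t" "c \<in> I" "x c = t" "0 < (a::int)" "0 < (b::int)"
    "c + a \<in> I" "c - b \<in> I"
  shows "(P (x (c + a)) (x (c - b)) \<longleftrightarrow> a \<le> b) \<and> (P (x (c - b)) (x (c + a)) \<longleftrightarrow> b \<le> a)"
proof -
  obtain v \<phi> where r: "represents (x ` I) P v" and d: "\<forall>m n :: nat. m < n \<longrightarrow> \<phi> n < \<phi> m"
    and e: "\<forall>c\<in>I. x c = t \<longrightarrow> (\<forall>m\<in>I. v (x m) = \<phi> (nat \<bar>m - c\<bar>))"
    using assms(1) unfolding symmetric_sp_def by blast
  have le: "\<phi> n \<le> \<phi> m \<longleftrightarrow> m \<le> n" for m n :: nat
    proof
    assume "\<phi> n \<le> \<phi> m" then show "m \<le> n" using d[rule_format, of n m] by linarith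
  next
    assume "m \<le> n" then show "\<phi> n \<le> \<phi> m"
      using d[rule_format, of m n] by (cases "m = n") auto
  qed
  have va: "v (x (c + a)) = \<phi> (nat a)" using e assms by auto
  have vb: "v (x (c - b)) = \<phi> (nat b)" using e assms by auto
  have P1: "P (x (c + a)) (x (c - b)) \<longleftrightarrow> v (x (c + a)) \<ge> v (x (c - b))"
    using r assms unfolding represents_def by blast
  have P2: "P (x (c - b)) (x (c + a)) \<longleftrightarrow> v (x (c - b)) \<ge> v (x (c + a))"
    using r assms unfolding represents_def by blast
  have n1: "nat a \<le> nat b \<longleftrightarrow> a \<le> b" "nat b \<le> nat a \<longleftrightarrow> b \<le> a" using assms(4,5) by auto
  show ?thesis unfolding P1 P2 va vb le n1 by simp
qed

lemma shape_case:
  assumes "shape_utility I x P t u" "c \<in> I" "x c = t"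
    "c + a \<in> I" "c - b \<in> I"
  shows "(P (x (c + a)) (x (c - b)) \<longleftrightarrow> u a \<ge> u (- b)) \<and> (P (x (c - b)) (x (c + a)) \<longleftrightarrow> u (-b) \<ge> u a)"
proof -
  obtain v where r: "represents (x ` I) P v"
    and e: "\<forall>c\<in>I. x c = t \<longrightarrow> (\<forall>m\<in>I. v (x m) = u (m - c))"
    using assms(1) unfolding shape_utility_def by blast
  have va: "v (x (c + a)) = u a" using e assms by auto
  have vb: "v (x (c - b)) = u (- b)" using e assms by auto
  have P1: "P (x (c + a)) (x (c - b)) \<longleftrightarrow> v (x (c + a)) \<ge> v (x (c - b))"
    using r assms unfolding represents_def by blast
  have P2: "P (x (c - b)) (x (c + a)) \<longleftrightarrow> v (x (c - b)) \<ge> v (x (c + a))"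
    using r assms unfolding represents_def by blast
  show ?thesis using P1 P2 va vb by auto
qed

theorem proposition3:
  fixes I :: "int set" and x :: "int \<Rightarrow> real"
    and PA PB :: "real \<Rightarrow> real \<Rightarrow> bool" and tA tB :: real
  assumes I: "int_interval I"
    and mono: "\<forall>j. j \<in> I \<longrightarrow> j + 1 \<in> I \<longrightarrow> x j < x (j + 1)"
    and wA: "weak_order_on (x ` I) PA" and wB: "weak_order_on (x ` I) PB"
    and iA: "unique_ideal_point (x ` I) PA tA"
    and iB: "unique_ideal_point (x ` I) PB tB"
    and cond: "(symmetric_sp I x PA tA \<and> symmetric_sp I x PB tB) \<or>
               (\<exists>u. shape_utility I x PA tA u \<and> shape_utility I x PB tB u)"
  shows "\<forall>cA\<in>I. \<forall>cB\<in>I. \<forall>a b :: int.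
           x cA = tA \<longrightarrow> x cB = tB \<longrightarrow> 0 < a \<longrightarrow> 0 < b \<longrightarrow>
           cA + a \<in> I \<longrightarrow> cA - b \<in> I \<longrightarrow> cB + a \<in> I \<longrightarrow> cB - b \<in> I \<longrightarrow>
           (PA (x (cA + a)) (x (cA - b)) \<longleftrightarrow> PB (x (cB + a)) (x (cB - b))) \<and>
           (PA (x (cA - b)) (x (cA + a)) \<longleftrightarrow> PB (x (cB - b)) (x (cB + a)))"
proof (intro ballI allI impI)
  fix cA cB a b
  assume h: "cA \<in> I" "cB \<in> I" "x cA = tA" "x cB = tB" "0 < (a::int)" "0 < (b::int)"
    "cA + a \<in> I" "cA - b \<in> I" "cB + a \<in> I" "cB - b \<in> I"
  from cond show "(PA (x (cA + a)) (x (cA - b)) \<longleftrightarrow> PB (x (cB + a)) (x (cB - b))) \<and>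
           (PA (x (cA - b)) (x (cA + a)) \<longleftrightarrow> PB (x (cB - b)) (x (cB + a)))"
  proof
    assume s: "symmetric_sp I x PA tA \<and> symmetric_sp I x PB tB"
    show ?thesis
      using sym_case[OF conjunct1[OF s] h(1) h(3) h(5) h(6) h(7) h(8)]
        sym_case[OF conjunct2[OF s] h(2) h(4) h(5) h(6) h(9) h(10)] by simp
  next
    assume "\<exists>u. shape_utility I x PA tA u \<and> shape_utility I x PB tB u"
    then obtain u where s: "shape_utility I x PA tA u" "shape_utility I x PB tB u" by blast
    show ?thesis
      using shape_case[OF s(1) h(1) h(3) h(7) h(8)] shape_case[OF s(2) h(2) h(4) h(9) h(10)]
      by simp
  qed
qed

end
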